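(* Let $k$ be a positive integer and let $f\in H^{k,2}$ be such that $M_{f^{(k)}}(1)\leq 1$. Then, for every $0<r<1$, $$\|f\|_2\leq\sum_{s=0}^{k-1}\frac{(1-r)^s}{s!}M_{f^{(s)}}(r)+\left[\frac{\log r}{\log M_{f^{(k)}}(r)}\right]^k.$$
   Context: $\mathbb D$ is the open unit disk. $H^2$ is the Hardy space of $\mathbb D$, $\|f\|_2=\left(\frac{1}{2\pi}\int_0^{2\pi}|f(e^{i\theta})|^2d\theta\right)^{1/2}$ on boundary values, and $H^{k,2}=\{f\in H^2: f^{(j)}\in H^2,\ j=1,\dots,k\}$ (derivatives with respect to $z$). For $g$ analytic in $\mathbb D$ and $0<r<1$, $M_g(r)=\left(\frac{1}{2\pi}\int_0^{2\pi}|g(re^{i\theta})|^2d\theta\right)^{1/2}$, and $M_g(1)=\lim_{r\to1}M_g(r)=\sup_{r<1}M_g(r)$. *)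

theory Defs
  imports "HOL-Analysis.Analysis"
begin

definition intmean :: "(complex \<Rightarrow> complex) \<Rightarrow> real \<Rightarrow> real" where
  "intmean g r = sqrt (integral {0..2*pi} (\<lambda>t. (cmod (g (complex_of_real r * cis t)))\<^sup>2) / (2*pi))"

definition intmean1 :: "(complex \<Rightarrow> complex) \<Rightarrow> real" where
  "intmean1 g = (SUP r\<in>{0<..<1}. intmean g r)"

definition hardy2 :: "(complex \<Rightarrow> complex) \<Rightarrow> bool" where
  "hardy2 f \<longleftrightarrow> f holomorphic_on ball 0 1 \<and> bdd_above (intmean f ` {0<..<1})"

definition hardy_k2 :: "nat \<Rightarrow> (complex \<Rightarrow> complex) \<Rightarrow> bool" where
  "hardy_k2 k f \<longleftrightarrow> (\<forall>j\<le>k. hardy2 ((deriv ^^ j) f))"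

text \<open>H^2 norm; for f in H^2 the L^2 norm of the boundary values equals sup_r M_f(r).\<close>
definition hardy2_norm :: "(complex \<Rightarrow> complex) \<Rightarrow> real" where
  "hardy2_norm f = intmean1 f"

end

theory Submission
  imports Defs "HOL-Complex_Analysis.Cauchy_Integral_Formula"
begin
lemma cos_int_integral:
  fixes k :: int
  shows "((\<lambda>t. cos (of_int k * t)) has_integral (if k = 0 then 2*pi else 0)) {0..2*pi}"
proof (cases "k = 0")
  case True
  then show ?thesis using has_integral_const_real[of "1::real" 0 "2*pi"] by simp
next
  case False
  have "((\<lambda>t. cos (of_int k * t)) has_integral ((\<lambda>t. sin (of_int k * t) / of_int k) (2*pi) - (\<lambda>t. sin (of_int k * t) / of_int k) 0)) {0..2*pi}"
  proof (rule fundamental_theorem_of_calculus)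
    fix x assume "x \<in> {0..2*pi}"
    have "((\<lambda>t. sin (of_int k * t) / of_int k) has_real_derivative cos (of_int k * x)) (at x within {0..2*pi})"
      using False by (auto intro!: derivative_eq_intros)
    then show "((\<lambda>t. sin (of_int k * t) / of_int k) has_vector_derivative cos (of_int k * x)) (at x within {0..2*pi})"
      by (simp add: has_real_derivative_iff_has_vector_derivative)
  qed simp
  moreover have "sin (of_int k * (2*pi)) = 0"
    by (metis mult.commute sin_int_2pin)
  ultimately show ?thesis using False by simp
qed

lemma sin_int_integral:
  fixes k :: int
  shows "((\<lambda>t. sin (of_int k * t)) has_integral 0) {0..2*pi}"
proof (cases "k = 0")
  case True
  then show ?thesis by simp
next
  case False
  have "((\<lambda>t. sin (of_int k * t)) has_integral ((\<lambda>t. - cos (of_int k * t) / of_int k) (2*pi) - (\<lambda>t. - cos (of_int k * t) / of_int k) 0)) {0..2*pi}"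
  proof (rule fundamental_theorem_of_calculus)
    fix x assume "x \<in> {0..2*pi}"
    have "((\<lambda>t. - cos (of_int k * t) / of_int k) has_real_derivative sin (of_int k * x)) (at x within {0..2*pi})"
      using False by (auto intro!: derivative_eq_intros)
    then show "((\<lambda>t. - cos (of_int k * t) / of_int k) has_vector_derivative sin (of_int k * x)) (at x within {0..2*pi})"
      by (simp add: has_real_derivative_iff_has_vector_derivative)
  qed simp
  moreover have "cos (of_int k * (2*pi)) = 1"
    by (metis mult.commute cos_int_2pin)
  ultimately show ?thesis using False by simp
qed

lemma cmod_S_sq:
  fixes b :: "nat \<Rightarrow> complex" and \<rho> t :: real
  shows "(cmod (\<Sum>n<N. b n * (of_real \<rho> * cis t)^n))^2 =
    (\<Sum>n<N. \<Sum>m<N. Re (b n * cnj (b m) * of_real (\<rho>^(n+m))) * cos (of_int (int n - int m) * t)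
        - Im (b n * cnj (b m) * of_real (\<rho>^(n+m))) * sin (of_int (int n - int m) * t))"
proof -
  define S where "S = (\<Sum>n<N. b n * (of_real \<rho> * cis t)^n)"
  have S: "S = (\<Sum>n<N. b n * of_real (\<rho>^n) * cis (real n * t))"
    unfolding S_def by (intro sum.cong refl) (simp only: power_mult_distrib Complex.DeMoivre of_real_power mult.assoc)
  have cS: "cnj S = (\<Sum>m<N. cnj (b m) * of_real (\<rho>^m) * cis (- (real m * t)))"
    unfolding S by (simp add: cis_cnj)
  have "complex_of_real ((cmod S)^2) = S * cnj S" by (rule complex_norm_square)
  also have "\<dots> = (\<Sum>n<N. \<Sum>m<N. (b n * cnj (b m) * of_real (\<rho>^(n+m))) * cis (of_int (int n - int m) * t))"
    unfolding cS by (subst S, subst sum_product) (auto intro!: sum.cong simp: cis_mult power_add algebra_simps)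
  finally have "(cmod S)^2 = Re (\<Sum>n<N. \<Sum>m<N. (b n * cnj (b m) * of_real (\<rho>^(n+m))) * cis (of_int (int n - int m) * t))"
    by (metis Re_complex_of_real)
  also have "\<dots> = (\<Sum>n<N. \<Sum>m<N. Re (b n * cnj (b m) * of_real (\<rho>^(n+m))) * cos (of_int (int n - int m) * t)
        - Im (b n * cnj (b m) * of_real (\<rho>^(n+m))) * sin (of_int (int n - int m) * t))"
    by (simp add: Re_sum cis.sel)
  finally show ?thesis unfolding S_def .
qed

lemma S_integral:
  fixes b :: "nat \<Rightarrow> complex" and \<rho> :: real
  shows "((\<lambda>t. (cmod (\<Sum>n<N. b n * (of_real \<rho> * cis t)^n))^2) has_integral
     (2*pi * (\<Sum>n<N. (cmod (b n))^2 * \<rho>^(2*n)))) {0..2*pi}"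
proof -
  let ?c = "\<lambda>n m. b n * cnj (b m) * of_real (\<rho>^(n+m))"
  have "((\<lambda>t. \<Sum>n<N. \<Sum>m<N. Re (?c n m) * cos (of_int (int n - int m) * t)
        - Im (?c n m) * sin (of_int (int n - int m) * t)) has_integral
     (\<Sum>n<N. \<Sum>m<N. Re (?c n m) * (if int n - int m = 0 then 2*pi else 0) - Im (?c n m) * 0)) {0..2*pi}"
    by (intro has_integral_sum finite_lessThan has_integral_diff has_integral_mult_right
        cos_int_integral sin_int_integral)
  moreover have "(\<Sum>n<N. \<Sum>m<N. Re (?c n m) * (if int n - int m = 0 then 2*pi else 0) - Im (?c n m) * 0)
      = (\<Sum>n<N. Re (?c n n) * (2*pi))"
  proof (rule sum.cong[OF refl])
    fix n assume n: "n \<in> {..<N}"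
    have "(\<Sum>m<N. Re (?c n m) * (if int n - int m = 0 then 2*pi else 0) - Im (?c n m) * 0)
        = (\<Sum>m<N. if m = n then Re (?c n m) * (2*pi) else 0)"
      by (intro sum.cong refl) auto
    also have "\<dots> = Re (?c n n) * (2*pi)" using n by (simp add: sum.delta')
    finally show "(\<Sum>m<N. Re (?c n m) * (if int n - int m = 0 then 2*pi else 0) - Im (?c n m) * 0) = Re (?c n n) * (2*pi)" .
  qed
  moreover have "(\<Sum>n<N. Re (?c n n) * (2*pi)) = 2*pi * (\<Sum>n<N. (cmod (b n))^2 * \<rho>^(2*n))"
  proof -
    have "Re (?c n n) = (cmod (b n))^2 * \<rho>^(2*n)" for n
    proof -
      have "?c n n = of_real ((cmod (b n))^2 * \<rho>^(2*n))"
        by (simp add: complex_norm_square[symmetric] mult_2 power_add)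
      then show ?thesis by (metis Re_complex_of_real)
    qed
    then show ?thesis by (simp add: sum_distrib_left mult.commute)
  qed
  ultimately show ?thesis by (simp add: cmod_S_sq)
qed

lemma parseval:
  fixes g :: "complex \<Rightarrow> complex" and \<rho> :: real
  assumes hol: "g holomorphic_on ball 0 1" and \<rho>: "0 < \<rho>" "\<rho> < 1"
  shows "(\<lambda>n. (cmod ((deriv ^^ n) g 0 / fact n))^2 * \<rho>^(2*n)) sums (intmean g \<rho> ^2)"
proof -
  define b where "b n = (deriv ^^ n) g 0 / fact n" for n
  have ser: "(\<lambda>n. b n * z^n) sums g z" if "z \<in> ball 0 1" for z
    using holomorphic_power_series[OF hol that] by (simp add: b_def)
  define \<rho>' where "\<rho>' = (1+\<rho>)/2"
  have rr: "0 < \<rho>'" "\<rho> < \<rho>'" "\<rho>' < 1" using \<rho> by (auto simp: \<rho>'_def)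
  have "(\<lambda>n. b n * (of_real \<rho>')^n) sums g (of_real \<rho>')"
  proof (intro ser)
    show "of_real \<rho>' \<in> ball (0::complex) 1" using rr by simp
  qed
  then have "summable (\<lambda>n. norm (b n * (of_real \<rho>)^n))"
    using \<rho> rr by (intro powser_insidea[of _ "of_real \<rho>'"]) (auto simp: sums_summable)
  then have absm: "summable (\<lambda>n. norm (b n * (of_real \<rho> * cis t)^n))" for t
    by (simp add: norm_mult norm_power)
  define K where "K = (\<Sum>n. norm (b n * (of_real \<rho>)^n))"
  define S where "S N t = (\<Sum>n<N. b n * (of_real \<rho> * cis t)^n)" for N t
  have Sb: "norm (S N t) \<le> K" for N t
  proof -
    have "norm (S N t) \<le> (\<Sum>n<N. norm (b n * (of_real \<rho> * cis t)^n))"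
      unfolding S_def by (rule norm_sum)
    also have "\<dots> \<le> (\<Sum>n. norm (b n * (of_real \<rho> * cis t)^n))"
      by (intro sum_le_suminf absm) auto
    also have "\<dots> = K" unfolding K_def by (simp add: norm_mult norm_power)
    finally show ?thesis .
  qed
  have Sc: "(\<lambda>N. S N t) \<longlonglongrightarrow> g (of_real \<rho> * cis t)" for t
  proof -
    have "(\<lambda>n. b n * (of_real \<rho> * cis t)^n) sums g (of_real \<rho> * cis t)"
      using \<rho> by (intro ser) (simp add: norm_mult)
    then show ?thesis unfolding sums_def S_def .
  qed
  define I where "I = integral {0..2*pi} (\<lambda>t. (cmod (g (of_real \<rho> * cis t)))^2)"
  have d1: "(\<lambda>t. (cmod (S N t))^2) integrable_on {0..2*pi}" for N
    unfolding S_def using S_integral by blast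
  have d2: "(\<lambda>t. K^2) integrable_on {0..2*pi}" by (rule Henstock_Kurzweil_Integration.integrable_const_ivl)
  have d3: "norm ((cmod (S N t))^2) \<le> K^2" for N t
    using Sb[of N t] by (simp add: power_mono)
  have d4: "(\<lambda>N. (cmod (S N t))^2) \<longlonglongrightarrow> (cmod (g (of_real \<rho> * cis t)))^2" for t
    by (intro tendsto_intros Sc)
  note dc = dominated_convergence[of "\<lambda>N t. (cmod (S N t))^2", OF d1 d2 d3 d4]
  have "(\<lambda>N. integral {0..2*pi} (\<lambda>t. (cmod (S N t))^2)) \<longlonglongrightarrow> I"
    unfolding I_def by (rule dc(2))
  moreover have "integral {0..2*pi} (\<lambda>t. (cmod (S N t))^2) = 2*pi * (\<Sum>n<N. (cmod (b n))^2 * \<rho>^(2*n))" for N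
    unfolding S_def by (rule integral_unique[OF S_integral])
  ultimately have "(\<lambda>N. 2*pi * (\<Sum>n<N. (cmod (b n))^2 * \<rho>^(2*n))) \<longlonglongrightarrow> I" by simp
  then have "(\<lambda>N. (2*pi * (\<Sum>n<N. (cmod (b n))^2 * \<rho>^(2*n))) / (2*pi)) \<longlonglongrightarrow> I / (2*pi)"
    by (intro tendsto_intros) auto
  then have "(\<lambda>n. (cmod (b n))^2 * \<rho>^(2*n)) sums (I / (2*pi))"
    unfolding sums_def by simp
  moreover have "I \<ge> 0"
  proof -
    note dc(1)
    then show ?thesis unfolding I_def by (intro integral_nonneg) auto
  qed
  ultimately show ?thesis
    unfolding intmean_def I_def b_def by (simp add: real_sqrt_pow2)
qed

lemma interp:
  fixes s :: "nat \<Rightarrow> real"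
  assumes s0: "\<And>j. 0 \<le> s j" and sm: "(\<lambda>j. s j * r^(2*j)) sums Msq" and Mpos: "0 < Msq"
    and s1: "\<And>J. (\<Sum>j<J. s j) \<le> 1"
    and r: "0 < r" "r < 1" and t: "r \<le> t" "t \<le> 1"
  shows "(\<Sum>j<J. s j * t^(2*j)) \<le> exp (ln t * ln Msq / ln r)"
proof -
  have tpos: "0 < t" using r t by simp
  have lnr: "ln r < 0" using r by simp
  have "ln r \<le> ln t" using r t tpos by simp
  moreover have "ln t \<le> 0" using t tpos by simp
  ultimately have th: "0 \<le> ln t / ln r" "ln t / ln r \<le> 1"
    using lnr by (auto simp: divide_le_eq_1 divide_nonpos_neg)
  define \<theta> where "\<theta> = ln t / ln r"
  have tj: "t^(2*j) = Msq powr \<theta> * (r^(2*j)/Msq) powr \<theta>" for j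
  proof -
    have "Msq powr \<theta> * (r^(2*j)/Msq) powr \<theta> = (r^(2*j)) powr \<theta>"
      using Mpos r by (simp add: powr_mult[symmetric])
    also have "\<dots> = exp (\<theta> * (real (2*j) * ln r))"
      using r by (simp add: powr_def ln_realpow)
    also have "\<dots> = exp (real (2*j) * ln t)"
      using lnr by (simp add: \<theta>_def)
    also have "\<dots> = exp (ln (t^(2*j)))"
      using tpos by (simp only: ln_realpow)
    also have "\<dots> = t^(2*j)"
      using tpos by simp
    finally show ?thesis by simp
  qed
  have young: "(r^(2*j)/Msq) powr \<theta> \<le> \<theta> * (r^(2*j)/Msq) + (1 - \<theta>)" for j
    using Youngs_inequality_0[of \<theta> "1-\<theta>" "r^(2*j)/Msq" 1] th Mpos r by (simp add: \<theta>_def)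
  have "(\<Sum>j<J. s j * t^(2*j)) \<le> (\<Sum>j<J. s j * (Msq powr \<theta> * (\<theta> * (r^(2*j)/Msq) + (1 - \<theta>))))"
    unfolding tj by (intro sum_mono mult_left_mono s0 young) auto
  also have "\<dots> = Msq powr \<theta> * (\<theta> / Msq * (\<Sum>j<J. s j * r^(2*j)) + (1 - \<theta>) * (\<Sum>j<J. s j))"
  proof -
    have "(\<Sum>j<J. s j * (Msq powr \<theta> * (\<theta> * (r^(2*j)/Msq) + (1 - \<theta>))))
       = (\<Sum>j<J. (Msq powr \<theta> * (\<theta> / Msq)) * (s j * r^(2*j)) + (Msq powr \<theta> * (1 - \<theta>)) * s j)"
      by (intro sum.cong refl) (simp add: algebra_simps)
    also have "\<dots> = (Msq powr \<theta> * (\<theta> / Msq)) * (\<Sum>j<J. s j * r^(2*j)) + (Msq powr \<theta> * (1 - \<theta>)) * (\<Sum>j<J. s j)"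
      by (simp add: sum.distrib sum_distrib_left)
    finally show ?thesis by (simp only: distrib_left mult.assoc)
  qed
  also have "\<dots> \<le> Msq powr \<theta> * (\<theta> / Msq * Msq + (1 - \<theta>) * 1)"
  proof -
    have "(\<Sum>j<J. s j * r^(2*j)) \<le> Msq"
    proof -
      have "(\<Sum>j<J. s j * r^(2*j)) \<le> (\<Sum>j. s j * r^(2*j))"
        using sm s0 r by (intro sum_le_suminf) (auto simp: sums_summable)
      then show ?thesis using sums_unique[OF sm] by simp
    qed
    then show ?thesis
      using th[folded \<theta>_def] Mpos s1[of J]
      by (intro mult_left_mono add_mono) simp_all
  qed
  also have "\<dots> = exp (ln t * ln Msq / ln r)"
    using Mpos by (simp add: powr_def \<theta>_def)
  finally show ?thesis .
qed

lemma alg_aux: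
  fixes E d F \<alpha> p c :: real
  assumes "\<alpha> \<noteq> 0" "F \<noteq> 0" "c \<noteq> 0"
  shows "E * p / F / \<alpha> + (E * \<alpha> * (d * p) - E * (c * p)) / (c * F * \<alpha>) = E * (d * p) / (c * F)"
  using assms by (simp add: field_simps)

lemma Phi_deriv:
  fixes \<alpha> \<rho> :: real
  assumes "\<alpha> > 0"
  shows "((\<lambda>t. exp (\<alpha> * (t - \<rho>)) * (\<Sum>i\<le>m. (\<rho> - t)^i / (fact i * \<alpha>^(Suc m - i))))
     has_real_derivative (exp (\<alpha> * (x - \<rho>)) * (\<rho> - x)^m / fact m)) (at x)"
proof (induction m)
  case 0
  show ?case using assms
    by (auto intro!: derivative_eq_intros simp: field_simps)
next
  case (Suc m)
  have eq: "(\<lambda>t. exp (\<alpha> * (t - \<rho>)) * (\<Sum>i\<le>Suc m. (\<rho> - t)^i / (fact i * \<alpha>^(Suc (Suc m) - i))))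
    = (\<lambda>t. (exp (\<alpha> * (t - \<rho>)) * (\<Sum>i\<le>m. (\<rho> - t)^i / (fact i * \<alpha>^(Suc m - i)))) / \<alpha>
        + exp (\<alpha> * (t - \<rho>)) * (\<rho> - t)^(Suc m) / (fact (Suc m) * \<alpha>))"
  proof
    fix t
    have "(\<Sum>i\<le>m. (\<rho> - t)^i / (fact i * \<alpha>^(Suc (Suc m) - i))) = (\<Sum>i\<le>m. (\<rho> - t)^i / (fact i * \<alpha>^(Suc m - i))) / \<alpha>"
      unfolding sum_divide_distrib
      by (intro sum.cong refl) (simp add: Suc_diff_le field_simps)
    then show "exp (\<alpha> * (t - \<rho>)) * (\<Sum>i\<le>Suc m. (\<rho> - t)^i / (fact i * \<alpha>^(Suc (Suc m) - i)))
      = (exp (\<alpha> * (t - \<rho>)) * (\<Sum>i\<le>m. (\<rho> - t)^i / (fact i * \<alpha>^(Suc m - i)))) / \<alpha>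
        + exp (\<alpha> * (t - \<rho>)) * (\<rho> - t)^(Suc m) / (fact (Suc m) * \<alpha>)"
      by (simp add: algebra_simps)
  qed
  have "((\<lambda>t. (exp (\<alpha> * (t - \<rho>)) * (\<Sum>i\<le>m. (\<rho> - t)^i / (fact i * \<alpha>^(Suc m - i)))) / \<alpha>
        + exp (\<alpha> * (t - \<rho>)) * (\<rho> - t)^(Suc m) / (fact (Suc m) * \<alpha>)) has_real_derivative
     (exp (\<alpha> * (x - \<rho>)) * (\<rho> - x)^m / fact m) / \<alpha> +
       (exp (\<alpha> * (x - \<rho>)) * \<alpha> * (\<rho> - x)^(Suc m) - exp (\<alpha> * (x - \<rho>)) * (real (Suc m) * (\<rho> - x)^m)) / (fact (Suc m) * \<alpha>)) (at x)"
  proof (rule DERIV_add)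
    show "((\<lambda>t. (exp (\<alpha> * (t - \<rho>)) * (\<Sum>i\<le>m. (\<rho> - t)^i / (fact i * \<alpha>^(Suc m - i)))) / \<alpha>) has_real_derivative
      (exp (\<alpha> * (x - \<rho>)) * (\<rho> - x)^m / fact m) / \<alpha>) (at x)"
      by (rule DERIV_cdivide[OF Suc.IH])
    show "((\<lambda>t. exp (\<alpha> * (t - \<rho>)) * (\<rho> - t)^(Suc m) / (fact (Suc m) * \<alpha>)) has_real_derivative
      (exp (\<alpha> * (x - \<rho>)) * \<alpha> * (\<rho> - x)^(Suc m) - exp (\<alpha> * (x - \<rho>)) * (real (Suc m) * (\<rho> - x)^m)) / (fact (Suc m) * \<alpha>)) (at x)"
    proof (rule DERIV_cdivide)
      show "((\<lambda>t. exp (\<alpha> * (t - \<rho>)) * (\<rho> - t)^(Suc m)) has_real_derivative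
        (exp (\<alpha> * (x - \<rho>)) * \<alpha> * (\<rho> - x)^(Suc m) - exp (\<alpha> * (x - \<rho>)) * (real (Suc m) * (\<rho> - x)^m))) (at x)"
        apply (rule derivative_eq_intros refl)+
        apply simp
        done
    qed
  qed
  moreover have "(exp (\<alpha> * (x - \<rho>)) * (\<rho> - x)^m / fact m) / \<alpha> +
       (exp (\<alpha> * (x - \<rho>)) * \<alpha> * (\<rho> - x)^(Suc m) - exp (\<alpha> * (x - \<rho>)) * (real (Suc m) * (\<rho> - x)^m)) / (fact (Suc m) * \<alpha>)
     = exp (\<alpha> * (x - \<rho>)) * (\<rho> - x)^(Suc m) / fact (Suc m)"
    using assms alg_aux[of \<alpha> "fact m" "real (Suc m)" "exp (\<alpha> * (x - \<rho>))" "(\<rho> - x)^m" "\<rho> - x"]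
    by (simp only: fact_Suc power_Suc of_nat_mult) simp
  ultimately show ?case unfolding eq by simp
qed


lemma exp_int_bound:
  fixes \<alpha> r \<rho> :: real
  assumes a: "\<alpha> > 0" and rr: "r \<le> \<rho>"
  shows "(\<lambda>t. (\<rho> - t)^m / fact m * exp (\<alpha> * (t - \<rho>))) integrable_on {r..\<rho>}"
    "integral {r..\<rho>} (\<lambda>t. (\<rho> - t)^m / fact m * exp (\<alpha> * (t - \<rho>))) \<le> 1 / \<alpha>^(Suc m)"
proof -
  define \<Phi> where "\<Phi> t = exp (\<alpha> * (t - \<rho>)) * (\<Sum>i\<le>m. (\<rho> - t)^i / (fact i * \<alpha>^(Suc m - i)))" for t
  have "((\<lambda>x. exp (\<alpha> * (x - \<rho>)) * (\<rho> - x)^m / fact m) has_integral (\<Phi> \<rho> - \<Phi> r)) {r..\<rho>}"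
  proof (rule fundamental_theorem_of_calculus[OF rr])
    fix x assume "x \<in> {r..\<rho>}"
    show "(\<Phi> has_vector_derivative exp (\<alpha> * (x - \<rho>)) * (\<rho> - x)^m / fact m) (at x within {r..\<rho>})"
      unfolding \<Phi>_def using Phi_deriv[OF a, of \<rho> m x]
      by (simp add: has_real_derivative_iff_has_vector_derivative has_vector_derivative_at_within)
  qed
  moreover have "(\<lambda>x. exp (\<alpha> * (x - \<rho>)) * (\<rho> - x)^m / fact m) = (\<lambda>t. (\<rho> - t)^m / fact m * exp (\<alpha> * (t - \<rho>)))"
    by (auto simp: fun_eq_iff)
  ultimately have hi: "((\<lambda>t. (\<rho> - t)^m / fact m * exp (\<alpha> * (t - \<rho>))) has_integral (\<Phi> \<rho> - \<Phi> r)) {r..\<rho>}"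
    by simp
  then show "(\<lambda>t. (\<rho> - t)^m / fact m * exp (\<alpha> * (t - \<rho>))) integrable_on {r..\<rho>}" by blast
  have p1: "\<Phi> \<rho> = 1 / \<alpha>^(Suc m)"
  proof -
    have "(\<Sum>i\<le>m. (\<rho> - \<rho>)^i / (fact i * \<alpha>^(Suc m - i))) = (\<Sum>i\<le>m. if i = 0 then 1 / \<alpha>^(Suc m) else 0)"
      by (intro sum.cong refl) auto
    also have "\<dots> = 1 / \<alpha>^(Suc m)" by (simp add: sum.delta)
    finally show ?thesis by (simp add: \<Phi>_def)
  qed
  have p2: "\<Phi> r \<ge> 0"
    unfolding \<Phi>_def using rr a by (intro mult_nonneg_nonneg sum_nonneg divide_nonneg_nonneg) auto
  show "integral {r..\<rho>} (\<lambda>t. (\<rho> - t)^m / fact m * exp (\<alpha> * (t - \<rho>))) \<le> 1 / \<alpha>^(Suc m)"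
    using integral_unique[OF hi] p1 p2 by simp
qed

lemma lambda_trick:
  fixes X I J :: real
  assumes X: "X \<ge> 0" and I: "I \<ge> 0" and J: "J \<ge> 0"
    and h: "\<And>l. l > 0 \<Longrightarrow> X \<le> l * I / 2 + J / (2 * l)"
  shows "X^2 \<le> I * J"
proof (cases "X = 0")
  case True then show ?thesis using I J by simp
next
  case False
  then have Xp: "X > 0" using X by simp
  show ?thesis
  proof (cases "I = 0")
    case True
    have "X \<le> J / (2 * ((J+1)/X))" using h[of "(J+1)/X"] Xp J True by simp
    also have "\<dots> = J * X / (2 * (J + 1))" using Xp J by (simp add: field_simps)
    also have "\<dots> < X" using Xp J by (simp add: field_simps add_nonneg_pos)
    finally show ?thesis by simp
  next
    case False
    then have Ip: "I > 0" using I by simp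
    have "X \<le> (X/I) * I / 2 + J / (2 * (X/I))" using h[of "X/I"] Xp Ip by simp
    then have "X \<le> X / 2 + J * I / (2 * X)" using Ip Xp by (simp add: field_simps)
    then have "2 * X * X \<le> 2 * X * (X / 2 + J * I / (2 * X))" using Xp by simp
    also have "\<dots> = X * X + J * I" using Xp by (simp add: field_simps)
    finally show ?thesis by (simp add: power2_eq_square algebra_simps)
  qed
qed

lemma CS_remainder:
  fixes e :: "nat \<Rightarrow> real \<Rightarrow> real" and w m :: "real \<Rightarrow> real"
  assumes rr: "r \<le> \<rho>" and cw: "continuous_on {r..\<rho>} w" and ce: "\<And>n. continuous_on {r..\<rho>} (e n)"
    and cm: "continuous_on {r..\<rho>} m"
    and w0: "\<And>t. t \<in> {r..\<rho>} \<Longrightarrow> 0 \<le> w t" and m0: "\<And>t. t \<in> {r..\<rho>} \<Longrightarrow> 0 < m t"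
    and e0: "\<And>n t. t \<in> {r..\<rho>} \<Longrightarrow> 0 \<le> e n t"
    and bnd: "\<And>t. t \<in> {r..\<rho>} \<Longrightarrow> (\<Sum>n<N. (e n t)^2) \<le> (m t)^2"
  shows "(\<Sum>n<N. (integral {r..\<rho>} (\<lambda>t. w t * e n t))^2) \<le> (integral {r..\<rho>} (\<lambda>t. w t * m t))^2"
proof -
  define I where "I = integral {r..\<rho>} (\<lambda>t. w t * m t)"
  define J where "J n = integral {r..\<rho>} (\<lambda>t. w t * (e n t)^2 / m t)" for n
  have mnz: "\<And>t. t \<in> {r..\<rho>} \<Longrightarrow> m t \<noteq> 0" using m0 by force
  have int_wm: "(\<lambda>t. w t * m t) integrable_on {r..\<rho>}"
    by (intro integrable_continuous_interval continuous_intros cw cm)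
  have int_we: "(\<lambda>t. w t * e n t) integrable_on {r..\<rho>}" for n
    by (intro integrable_continuous_interval continuous_intros cw ce)
  have int_wJ: "(\<lambda>t. w t * (e n t)^2 / m t) integrable_on {r..\<rho>}" for n
    using mnz by (intro integrable_continuous_interval continuous_intros cw ce cm) auto
  have I0: "I \<ge> 0" unfolding I_def
    by (intro integral_nonneg int_wm) (auto intro!: mult_nonneg_nonneg w0 less_imp_le[OF m0])
  have J0: "J n \<ge> 0" for n unfolding J_def
    by (intro integral_nonneg int_wJ) (auto intro!: mult_nonneg_nonneg divide_nonneg_nonneg w0 less_imp_le[OF m0])
  have step1: "(integral {r..\<rho>} (\<lambda>t. w t * e n t))^2 \<le> I * J n" for n
  proof (rule lambda_trick[OF _ I0 J0])
    show "0 \<le> integral {r..\<rho>} (\<lambda>t. w t * e n t)"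
      by (intro integral_nonneg int_we) (auto intro!: mult_nonneg_nonneg w0 e0)
    fix l :: real assume l: "l > 0"
    have "integral {r..\<rho>} (\<lambda>t. w t * e n t) \<le> integral {r..\<rho>} (\<lambda>t. (l/2) * (w t * m t) + (1/(2*l)) * (w t * (e n t)^2 / m t))"
    proof (rule integral_le[OF int_we])
      show "(\<lambda>t. (l/2) * (w t * m t) + (1/(2*l)) * (w t * (e n t)^2 / m t)) integrable_on {r..\<rho>}"
        by (intro integrable_add integrable_on_mult_right int_wm int_wJ)
      fix t assume t: "t \<in> {r..\<rho>}"
      have mt: "m t > 0" using m0[OF t] .
      have "2 * l * m t * e n t \<le> (l * m t)^2 + (e n t)^2"
        using sum_squares_ge_zero[of "l * m t - e n t" 0] by (simp add: power2_eq_square algebra_simps)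
      then have "e n t \<le> (l/2) * m t + (1/(2*l)) * ((e n t)^2 / m t)"
        using mt l by (simp add: field_simps power2_eq_square)
      then have "w t * e n t \<le> w t * ((l/2) * m t + (1/(2*l)) * ((e n t)^2 / m t))"
        by (intro mult_left_mono w0[OF t])
      then show "w t * e n t \<le> (l/2) * (w t * m t) + (1/(2*l)) * (w t * (e n t)^2 / m t)"
        by (simp add: algebra_simps)
    qed
    also have "\<dots> = integral {r..\<rho>} (\<lambda>t. (l/2) * (w t * m t)) + integral {r..\<rho>} (\<lambda>t. (1/(2*l)) * (w t * (e n t)^2 / m t))"
      by (rule integral_add) (intro integrable_on_mult_right int_wm int_wJ)+
    also have "\<dots> = (l/2) * I + (1/(2*l)) * J n"
      unfolding I_def J_def by (simp only: integral_mult_right)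
    finally show "integral {r..\<rho>} (\<lambda>t. w t * e n t) \<le> l * I / 2 + J n / (2 * l)" by simp
  qed
  have step2: "(\<Sum>n<N. J n) \<le> I"
  proof -
    have "(\<Sum>n<N. J n) = integral {r..\<rho>} (\<lambda>t. \<Sum>n<N. w t * (e n t)^2 / m t)"
      unfolding J_def by (rule integral_sum[symmetric]) (auto intro: int_wJ)
    also have "\<dots> \<le> I"
      unfolding I_def
    proof (rule integral_le)
      show "(\<lambda>t. \<Sum>n<N. w t * (e n t)^2 / m t) integrable_on {r..\<rho>}"
        by (intro integrable_sum finite_lessThan int_wJ)
      fix t assume t: "t \<in> {r..\<rho>}"
      have "(\<Sum>n<N. w t * (e n t)^2 / m t) = w t / m t * (\<Sum>n<N. (e n t)^2)"
        by (simp add: sum_distrib_left)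
      also have "\<dots> \<le> w t / m t * (m t)^2"
        using bnd[OF t] w0[OF t] m0[OF t] by (intro mult_left_mono) auto
      also have "\<dots> = w t * m t" using m0[OF t] by (simp add: power2_eq_square)
      finally show "(\<Sum>n<N. w t * (e n t)^2 / m t) \<le> w t * m t" .
    qed (rule int_wm)
    finally show ?thesis .
  qed
  have "(\<Sum>n<N. (integral {r..\<rho>} (\<lambda>t. w t * e n t))^2) \<le> (\<Sum>n<N. I * J n)"
    by (intro sum_mono step1)
  also have "\<dots> = I * (\<Sum>n<N. J n)" by (simp add: sum_distrib_left)
  also have "\<dots> \<le> I * I" using step2 I0 by (intro mult_left_mono)
  finally show ?thesis unfolding I_def by (simp add: power2_eq_square)
qed

definition Dp :: "nat \<Rightarrow> nat \<Rightarrow> real \<Rightarrow> real" where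
  "Dp n i t = (if i \<le> n then fact n / fact (n - i) * t^(n - i) else 0)"

lemma Dp_deriv: "((Dp n m) has_real_derivative Dp n (Suc m) t) (at t)"
proof (cases "m < n")
  case True
  then obtain d where d: "n - m = Suc d" "n - Suc m = d" by (metis Suc_diff_Suc)
  have eq: "Dp n m = (\<lambda>t. fact n / fact (Suc d) * t^(Suc d))"
    using True d by (auto simp: Dp_def fun_eq_iff)
  have "((\<lambda>t. fact n / fact (Suc d) * t^(Suc d)) has_real_derivative fact n / fact (Suc d) * (real (Suc d) * t^d)) (at t)"
    using DERIV_cmult[OF DERIV_pow[of "Suc d" t], of "fact n / fact (Suc d)"] by simp
  moreover have "fact n / fact (Suc d) * (real (Suc d) * t^d) = Dp n (Suc m) t"
    using True d by (simp add: Dp_def fact_Suc del: of_nat_Suc)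
  ultimately show ?thesis unfolding eq by simp
next
  case False
  then have "Dp n m = (\<lambda>t. if m = n then fact n else 0)"
    by (auto simp: Dp_def fun_eq_iff)
  moreover have "Dp n (Suc m) t = 0" using False by (simp add: Dp_def)
  ultimately show ?thesis by simp
qed

lemma taylor_pow:
  fixes r \<rho> :: real
  assumes "0 < k" "r \<le> \<rho>"
  shows "\<rho>^n = (\<Sum>i<k. (\<rho> - r)^i / fact i * Dp n i r) + integral {r..\<rho>} (\<lambda>x. (\<rho> - x)^(k-1) / fact (k-1) * Dp n k x)"
proof -
  have "Dp n 0 = (\<lambda>t. t^n)" by (simp add: Dp_def fun_eq_iff)
  from Taylor_integral[of k "Dp n" "\<lambda>t. t^n" r \<rho>, OF assms(1) this _ assms(2)]
  show ?thesis
    using Dp_deriv by (auto simp: has_real_derivative_iff_has_vector_derivative[symmetric]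
        intro: has_field_derivative_at_within)
qed

lemma shift_eq: fixes N s :: nat shows "(\<Sum>n<N. if s \<le> n then g (n - s) else 0) = (\<Sum>j<N - s. g j)"
proof (induction N)
  case 0 then show ?case by simp
next
  case (Suc N)
  show ?case
  proof (cases "s \<le> N")
    case True
    then have "Suc N - s = Suc (N - s)" by simp
    then show ?thesis using Suc True by simp
  next
    case False
    then show ?thesis using Suc by simp
  qed
qed

lemma shift_le:
  fixes g :: "nat \<Rightarrow> real"
  assumes "g sums G" "\<And>j. 0 \<le> g j"
  shows "(\<Sum>n<N. if s \<le> n then g (n - s) else 0) \<le> G"
proof -
  have "(\<Sum>j<N - s. g j) \<le> (\<Sum>j. g j)"
    using assms by (intro sum_le_suminf) (auto simp: sums_summable)
  then show ?thesis unfolding shift_eq using sums_unique[OF assms(1)] by simp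
qed

lemma L2_set_sum_triangle:
  assumes "finite S"
  shows "L2_set (\<lambda>i. \<Sum>s\<in>S. u s i) A \<le> (\<Sum>s\<in>S. L2_set (u s) A)"
  using assms
proof (induction S rule: finite_induct)
  case empty then show ?case by (simp add: L2_set_0')
next
  case (insert x F)
  have "L2_set (\<lambda>i. \<Sum>s\<in>insert x F. u s i) A = L2_set (\<lambda>i. u x i + (\<Sum>s\<in>F. u s i)) A"
    using insert by simp
  also have "\<dots> \<le> L2_set (u x) A + L2_set (\<lambda>i. \<Sum>s\<in>F. u s i) A"
    by (rule L2_set_triangle_ineq)
  also have "\<dots> \<le> L2_set (u x) A + (\<Sum>s\<in>F. L2_set (u s) A)"
    using insert by simp
  finally show ?case using insert by simp
qed

lemma Dp_cont: "continuous_on S (Dp n i)"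
  by (rule DERIV_continuous_on) (rule has_field_derivative_at_within[OF Dp_deriv])

lemma Dp_nonneg: "0 \<le> t \<Longrightarrow> 0 \<le> Dp n i t"
  by (simp add: Dp_def)

theorem lemma4:
  fixes k :: nat and f :: "complex \<Rightarrow> complex" and r :: real
  assumes "k > 0" and "hardy_k2 k f" and "intmean1 ((deriv ^^ k) f) \<le> 1"
    and "0 < r" and "r < 1"
  shows "intmean ((deriv ^^ k) f) r = 1 \<or>
    hardy2_norm f \<le> (\<Sum>s<k. (1 - r) ^ s / fact s * intmean ((deriv ^^ s) f) r)
       + (ln r / ln (intmean ((deriv ^^ k) f) r)) ^ k"
proof -
  have kpos: "0 < k" and r0: "0 < r" and r1: "r < 1" using assms by auto
  define F where "F s = (deriv ^^ s) f" for s
  define A where "A n = (deriv ^^ n) f 0" for n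
  define q where "q s j = (cmod (A (j+s)) / fact j)^2" for s j
  have hk: "hardy2 (F j)" if "j \<le> k" for j
    using assms(2) that unfolding hardy_k2_def F_def by blast
  have hol: "F s holomorphic_on ball 0 1" if "s \<le> k" for s
    using hk[OF that] unfolding hardy2_def by blast
  have bdd: "bdd_above (intmean (F s) ` {0<..<1})" if "s \<le> k" for s
    using hk[OF that] unfolding hardy2_def by (rule conjunct2)
  have coef: "(deriv ^^ j) (F s) 0 = A (j + s)" for j s
    unfolding F_def A_def by (simp add: funpow_add)
  have ser: "(\<lambda>j. q s j * \<rho>^(2*j)) sums (intmean (F s) \<rho>)^2" if "s \<le> k" "0 < \<rho>" "\<rho> < 1" for s \<rho>
    using parseval[OF hol[OF that(1)] that(2,3)] unfolding q_def coef by (simp add: norm_divide)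
  have q0: "0 \<le> q s j" for s j unfolding q_def by simp
  have im0: "0 \<le> intmean g \<rho>" for g \<rho>
  proof -
    have "0 \<le> integral {0..2*pi} (\<lambda>t. (cmod (g (complex_of_real \<rho> * cis t)))\<^sup>2)"
      by (cases "(\<lambda>t. (cmod (g (complex_of_real \<rho> * cis t)))\<^sup>2) integrable_on {0..2*pi}")
        (auto intro: integral_nonneg simp: not_integrable_integral)
    then show ?thesis unfolding intmean_def by simp
  qed
  have im_le: "intmean (F s) \<rho> \<le> intmean1 (F s)" if "s \<le> k" "0 < \<rho>" "\<rho> < 1" for s \<rho>
    unfolding intmean1_def using that by (intro cSUP_upper bdd) auto
  have I1: "intmean1 (F k) \<le> 1" using assms(3) by (simp add: F_def)
  define Mk where "Mk = intmean (F k) r"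
  have Mk0: "0 \<le> Mk" unfolding Mk_def by (rule im0)
  have Mk1: "Mk \<le> 1" using im_le[of k r] I1 r0 r1 unfolding Mk_def by simp
  show ?thesis
  proof (cases "Mk = 1")
    case True then show ?thesis unfolding Mk_def F_def by simp
  next
    case False
    then have Mk1': "Mk < 1" using Mk1 by simp
    define B where "B = (ln r / ln Mk)^k"
    have B0: "0 \<le> B"
    proof -
      have "0 \<le> ln r / ln Mk"
      proof (cases "Mk = 0")
        case True then show ?thesis by simp
      next
        case False
        then have "ln Mk < 0" using Mk0 Mk1' by simp
        moreover have "ln r < 0" using r0 r1 by simp
        ultimately show ?thesis by (simp add: zero_le_divide_iff)
      qed
      then show ?thesis unfolding B_def by simp
    qed
    define RHS where "RHS = (\<Sum>s<k. (1 - r)^s / fact s * intmean (F s) r) + B"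
    have sum0: "0 \<le> (\<Sum>s<k. (1 - r)^s / fact s * intmean (F s) r)"
      using r1 by (intro sum_nonneg mult_nonneg_nonneg divide_nonneg_nonneg im0) auto
    have RHS0: "0 \<le> RHS" unfolding RHS_def using sum0 B0 by simp
    have imr: "intmean f r \<le> RHS"
    proof -
      have "intmean f r = (1 - r)^0 / fact 0 * intmean (F 0) r" by (simp add: F_def)
      also have "\<dots> \<le> (\<Sum>s<k. (1 - r)^s / fact s * intmean (F s) r)"
        using kpos r1 by (intro member_le_sum mult_nonneg_nonneg divide_nonneg_nonneg im0) auto
      finally show ?thesis unfolding RHS_def using B0 by simp
    qed
    have partial: "(\<Sum>n<N. q 0 n * \<rho>^(2*n)) \<le> RHS^2" if \<rho>: "0 < \<rho>" "\<rho> < 1" for \<rho> N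
    proof (cases "\<rho> \<le> r")
      case True
      have "(\<Sum>n<N. q 0 n * \<rho>^(2*n)) \<le> (\<Sum>n<N. q 0 n * r^(2*n))"
        using True \<rho> by (intro sum_mono mult_left_mono power_mono q0) auto
      also have "\<dots> \<le> (\<Sum>n. q 0 n * r^(2*n))"
        using ser[of 0 r] r0 r1 q0 by (intro sum_le_suminf) (auto simp: sums_summable)
      also have "\<dots> = (intmean f r)^2"
        using sums_unique[OF ser[of 0 r]] r0 r1 by (simp add: F_def)
      also have "\<dots> \<le> RHS^2" using imr im0 by (intro power_mono) auto
      finally show ?thesis .
    next
      case False
      then have r\<rho>: "r < \<rho>" by simp
      define v where "v n = cmod (A n) / fact n * \<rho>^n" for n
      define u where "u s n = (\<rho> - r)^s / fact s * (cmod (A n) / fact n * Dp n s r)" for s n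
      define wf where "wf t = (\<rho> - t)^(k-1) / fact (k-1)" for t
      define e where "e n t = cmod (A n) / fact n * Dp n k t" for n t
      define wr where "wr n = integral {r..\<rho>} (\<lambda>t. wf t * e n t)" for n
      have vdec: "v n = (\<Sum>s<k. u s n) + wr n" for n
      proof -
        define c where "c = cmod (A n) / fact n"
        have t: "\<rho>^n = (\<Sum>i<k. (\<rho> - r)^i / fact i * Dp n i r) + integral {r..\<rho>} (\<lambda>x. wf x * Dp n k x)"
          unfolding wf_def using taylor_pow[of k r \<rho> n] kpos r\<rho> by simp
        have "v n = c * \<rho>^n" by (simp add: v_def c_def)
        also have "\<dots> = (\<Sum>i<k. c * ((\<rho> - r)^i / fact i * Dp n i r)) + c * integral {r..\<rho>} (\<lambda>x. wf x * Dp n k x)"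
          by (subst t) (simp add: distrib_left sum_distrib_left)
        also have "(\<Sum>i<k. c * ((\<rho> - r)^i / fact i * Dp n i r)) = (\<Sum>s<k. u s n)"
          unfolding u_def c_def by (intro sum.cong refl) (simp add: algebra_simps)
        also have "c * integral {r..\<rho>} (\<lambda>x. wf x * Dp n k x) = wr n"
          unfolding wr_def e_def c_def by (simp add: algebra_simps flip: integral_mult_right)
        finally show ?thesis .
      qed
      have L2v: "(\<Sum>n<N. q 0 n * \<rho>^(2*n)) = (L2_set v {..<N})^2"
      proof -
        have "(\<Sum>n<N. q 0 n * \<rho>^(2*n)) = (\<Sum>n<N. (v n)^2)"
          unfolding q_def v_def by (intro sum.cong refl) (simp add: power_divide power_mult_distrib mult.commute[of 2] flip: power_mult)
        then show ?thesis unfolding L2_set_def by (simp add: sum_nonneg)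
      qed
      have ub: "L2_set (u s) {..<N} \<le> (1 - r)^s / fact s * intmean (F s) r" if s: "s < k" for s
      proof -
        have "L2_set (u s) {..<N} = (\<rho> - r)^s / fact s * L2_set (\<lambda>n. cmod (A n) / fact n * Dp n s r) {..<N}"
          unfolding u_def using r\<rho> by (subst L2_set_right_distrib) auto
        also have "\<dots> \<le> (1 - r)^s / fact s * intmean (F s) r"
        proof (rule mult_mono)
          show "(\<rho> - r)^s / fact s \<le> (1 - r)^s / fact s"
            using r\<rho> \<rho> by (intro divide_right_mono power_mono) auto
          have "(\<Sum>n<N. (cmod (A n) / fact n * Dp n s r)^2) = (\<Sum>n<N. if s \<le> n then q s (n - s) * r^(2*(n-s)) else 0)"
          proof (intro sum.cong refl)
            fix n
            show "(cmod (A n) / fact n * Dp n s r)^2 = (if s \<le> n then q s (n - s) * r^(2*(n-s)) else 0)"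
            proof (cases "s \<le> n")
              case True
              then have "cmod (A n) / fact n * Dp n s r = cmod (A (n - s + s)) / fact (n - s) * r^(n-s)"
                by (simp add: Dp_def)
              then show ?thesis using True by (simp add: q_def power_divide power_mult_distrib mult.commute[of 2] flip: power_mult)
            qed (simp add: Dp_def)
          qed
          also have "\<dots> \<le> (intmean (F s) r)^2"
            using s by (intro shift_le[OF ser] mult_nonneg_nonneg q0) (use r0 r1 in auto)
          finally show "L2_set (\<lambda>n. cmod (A n) / fact n * Dp n s r) {..<N} \<le> intmean (F s) r"
            unfolding L2_set_def using im0 by (simp add: real_sqrt_le_iff real_le_lsqrt)
        qed (use r\<rho> r1 im0 in auto)
        finally show ?thesis .
      qed
      have wb: "L2_set wr {..<N} \<le> B"
      proof (cases "Mk = 0")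
        case True
        have "(\<lambda>j. q k j * r^(2*j)) sums 0"
          using ser[of k r] r0 r1 True unfolding Mk_def by simp
        then have "\<forall>j. q k j * r^(2*j) = 0"
          using suminf_eq_zero_iff[of "\<lambda>j. q k j * r^(2*j)"] q0 r0
          by (simp add: sums_iff)
        then have Az: "A (j + k) = 0" for j using r0 by (auto simp: q_def)
        have "e n t = 0" for n t
        proof (cases "k \<le> n")
          case True
          then have "A n = 0" using Az[of "n - k"] by simp
          then show ?thesis by (simp add: e_def)
        qed (simp add: e_def Dp_def)
        then have "wr n = 0" for n by (simp add: wr_def)
        then show ?thesis using B0 by (simp add: L2_set_def)
      next
        case False
        then have Mkp: "0 < Mk" using Mk0 by simp
        have lnMk: "ln Mk < 0" using Mkp Mk1' by simp
        have lnr: "ln r < 0" using r0 r1 by simp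
        define \<alpha> where "\<alpha> = ln Mk / ln r"
        have \<alpha>0: "0 < \<alpha>" unfolding \<alpha>_def using lnMk lnr by (simp add: divide_neg_neg)
        define mf where "mf t = exp (\<alpha> * (t - \<rho>))" for t
        have s1: "(\<Sum>j<J. q k j) \<le> 1" for J
        proof -
          have lim: "((\<lambda>x. \<Sum>j<J. q k j * x^(2*j)) \<longlongrightarrow> (\<Sum>j<J. q k j * 1^(2*j))) (at_left 1)"
            by (intro tendsto_intros)
          have ev: "eventually (\<lambda>x. (\<Sum>j<J. q k j * x^(2*j)) \<le> 1) (at_left (1::real))"
          proof (rule eventually_mono[OF eventually_at_left_real[of 0 1]])
            fix x :: real assume x: "x \<in> {0<..<1}"
            have "(\<Sum>j<J. q k j * x^(2*j)) \<le> (\<Sum>j. q k j * x^(2*j))"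
              using ser[of k x] x q0 by (intro sum_le_suminf) (auto simp: sums_summable)
            also have "\<dots> = (intmean (F k) x)^2" using sums_unique[OF ser[of k x]] x by simp
            also have "\<dots> \<le> 1"
              using im_le[of k x] I1 im0[of "F k" x] x by (intro power_le_one) auto
            finally show "(\<Sum>j<J. q k j * x^(2*j)) \<le> 1" .
          qed simp
          show ?thesis using tendsto_upperbound[OF lim ev] by simp
        qed
        have bnd: "(\<Sum>n<N. (e n t)^2) \<le> (mf t)^2" if t: "t \<in> {r..\<rho>}" for t
        proof -
          have tp: "0 < t" using t r0 by simp
          have "(\<Sum>n<N. (e n t)^2) = (\<Sum>n<N. if k \<le> n then q k (n - k) * t^(2*(n-k)) else 0)"
          proof (intro sum.cong refl)
            fix n
            show "(e n t)^2 = (if k \<le> n then q k (n - k) * t^(2*(n-k)) else 0)"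
            proof (cases "k \<le> n")
              case True
              then have "e n t = cmod (A (n - k + k)) / fact (n - k) * t^(n-k)"
                by (simp add: e_def Dp_def)
              then show ?thesis using True
                by (simp add: q_def power_divide power_mult_distrib mult.commute[of 2] flip: power_mult)
            qed (simp add: e_def Dp_def)
          qed
          also have "\<dots> = (\<Sum>j<N - k. q k j * t^(2*j))" by (rule shift_eq)
          also have "\<dots> \<le> exp (ln t * ln (Mk^2) / ln r)"
          proof (rule interp[OF q0 _ _ s1])
            show "(\<lambda>j. q k j * r^(2*j)) sums Mk^2" using ser[of k r] r0 r1 unfolding Mk_def by simp
          qed (use t \<rho> r0 r1 Mkp in auto)
          also have "\<dots> = exp (2 * \<alpha> * ln t)"
            using Mkp by (simp add: ln_realpow \<alpha>_def)
          also have "\<dots> \<le> exp (2 * \<alpha> * (t - \<rho>))"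
          proof -
            have "ln t \<le> t - 1" using tp by (rule ln_le_minus_one)
            then have "ln t \<le> t - \<rho>" using \<rho> by simp
            then show ?thesis using \<alpha>0 by simp
          qed
          also have "\<dots> = (mf t)^2"
            by (simp add: mf_def power2_eq_square flip: exp_add)
          finally show ?thesis .
        qed
        have "(\<Sum>n<N. (wr n)^2) \<le> (integral {r..\<rho>} (\<lambda>t. wf t * mf t))^2"
          unfolding wr_def
        proof (rule CS_remainder)
          show "r \<le> \<rho>" using r\<rho> by simp
          show "continuous_on {r..\<rho>} wf" unfolding wf_def by (intro continuous_intros) auto
          show "continuous_on {r..\<rho>} (e n)" for n unfolding e_def
            by (intro continuous_intros Dp_cont)
          show "continuous_on {r..\<rho>} mf" unfolding mf_def by (intro continuous_intros)
          show "0 \<le> wf t" if "t \<in> {r..\<rho>}" for t using that unfolding wf_def by simp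
          show "0 < mf t" for t unfolding mf_def by simp
          show "0 \<le> e n t" if "t \<in> {r..\<rho>}" for n t
            using that r0 unfolding e_def by (intro mult_nonneg_nonneg Dp_nonneg) auto
        qed (rule bnd)
        also have "\<dots> \<le> (1 / \<alpha>^k)^2"
        proof -
          have k1: "Suc (k - 1) = k" using kpos by simp
          note eb = exp_int_bound[OF \<alpha>0 less_imp_le[OF r\<rho>], of "k-1", unfolded k1]
          have eqf: "(\<lambda>t. wf t * mf t) = (\<lambda>t. (\<rho> - t)^(k-1) / fact (k-1) * exp (\<alpha> * (t - \<rho>)))"
            by (simp add: wf_def mf_def fun_eq_iff)
          have "0 \<le> integral {r..\<rho>} (\<lambda>t. wf t * mf t)"
            unfolding eqf using eb(1) r\<rho> by (intro integral_nonneg) auto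
          then show ?thesis using eb(2) unfolding eqf by (intro power_mono) auto
        qed
        finally have "(\<Sum>n<N. (wr n)^2) \<le> (1 / \<alpha>^k)^2" .
        moreover have "1 / \<alpha>^k = B"
          unfolding B_def \<alpha>_def by (simp add: power_divide)
        ultimately show ?thesis
          unfolding L2_set_def using B0 by (simp add: real_sqrt_le_iff real_le_lsqrt)
      qed
      have "L2_set v {..<N} = L2_set (\<lambda>n. (\<Sum>s<k. u s n) + wr n) {..<N}"
        using vdec by (intro L2_set_cong) auto
      also have "\<dots> \<le> L2_set (\<lambda>n. \<Sum>s<k. u s n) {..<N} + L2_set wr {..<N}"
        by (rule L2_set_triangle_ineq)
      also have "\<dots> \<le> (\<Sum>s<k. L2_set (u s) {..<N}) + B"
        by (intro add_mono wb L2_set_sum_triangle) simp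
      also have "\<dots> \<le> RHS"
        unfolding RHS_def by (intro add_mono sum_mono ub order_refl) simp
      finally have "L2_set v {..<N} \<le> RHS" .
      then show ?thesis unfolding L2v by (intro power_mono) auto
    qed
    have main: "intmean f \<rho> \<le> RHS" if \<rho>: "0 < \<rho>" "\<rho> < 1" for \<rho>
    proof -
      have "(intmean f \<rho>)^2 = (\<Sum>n. q 0 n * \<rho>^(2*n))"
        using sums_unique[OF ser[of 0 \<rho>]] \<rho> by (simp add: F_def)
      also have "\<dots> \<le> RHS^2"
      proof (rule suminf_le_const)
        show "summable (\<lambda>n. q 0 n * \<rho>^(2*n))" using ser[of 0 \<rho>] \<rho> sums_summable by blast
        fix N show "(\<Sum>n<N. q 0 n * \<rho>^(2*n)) \<le> RHS^2" by (rule partial[OF \<rho>])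
      qed
      finally show ?thesis using RHS0 by (rule power2_le_imp_le)
    qed
    have "hardy2_norm f \<le> RHS"
      unfolding hardy2_norm_def intmean1_def by (rule cSUP_least) (auto intro: main)
    then show ?thesis unfolding RHS_def B_def Mk_def F_def by simp
  qed
qed

end
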